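(* Let $d\ge2$ and let $K\subset\mathbb{T}$ be a closed set with $E_d(K)=K$ having the non-wandering property. Let $y\in K$ be a regular critical value, with neighborhood $U$ and maps $\eta_-(x)=\frac{x}{d}+\frac{j_1}{d}$ on the left component $B_-$ of $U\setminus\{y\}$ and $\eta_+(x)=\frac{x}{d}+\frac{j_2}{d}$ on the right component $B_+$ (with $j_1,j_2\in\{0,\dots,d-1\}$) as in the definition of regularity. Then $j_1\ne j_2$, and every point of $E_d^{-1}(y)\cap K$ is equal to $\frac{y}{d}+\frac{j_1}{d}$ or to $\frac{y}{d}+\frac{j_2}{d}$; in particular $\#(E_d^{-1}(y)\cap K)=2$.
   Context: $\mathbb{T}=\mathbb{R}/\mathbb{Z}$, $E_d(x)=dx\bmod 1$. A point $x\in K$ is a critical value if $\#(E_d^{-1}(x)\cap K)>1$. A critical value $x$ is regular if there is a connected open neighborhood $U$ of $x$ such that for each of the two components $B$ of $U\setminus\{x\}$ there is a continuous $\eta_B:B\to\mathbb{T}$ with $E_d\circ\eta_B=\mathrm{id}_B$ and, for every $z\in B\cap K$, $\eta_B(z)$ is the unique point of $E_d^{-1}(z)\cap K$. $K$ has the non-wandering property if for all $x\in K$ and $\varepsilon>0$ there exist $y\in K$ and $n>0$ with $d(x,y)<\varepsilon$ and $d(x,E_d^n(y))<\varepsilon$. *)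

theory Defs
  imports "HOL-Analysis.Analysis"
begin

text \<open>The circle T = R/Z is modelled through lifts: a point of T is represented by any
real number, two reals representing the same point iff their difference is an integer.
A subset K of T is represented by its full preimage in R, a 1-periodic set.
E_d(x) = d x mod 1 is represented by multiplication by d.\<close>

definition periodic_set :: "real set \<Rightarrow> bool" where
  "periodic_set K \<longleftrightarrow> (\<forall>x. x \<in> K \<longleftrightarrow> x + 1 \<in> K)"

definition circ_dist :: "real \<Rightarrow> real \<Rightarrow> real" where
  "circ_dist x y = min (frac (x - y)) (1 - frac (x - y))"

definition Ed_invariant :: "nat \<Rightarrow> real set \<Rightarrow> bool" where
  "Ed_invariant d K \<longleftrightarrow>
     (\<forall>x\<in>K. real d * x \<in> K) \<and> (\<forall>y\<in>K. \<exists>x\<in>K. real d * x - y \<in> \<int>)"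

text \<open>The points of E_d^{-1}(y) \<inter> K, each represented by its unique lift in [0,1).\<close>
definition preimage_pts :: "nat \<Rightarrow> real set \<Rightarrow> real \<Rightarrow> real set" where
  "preimage_pts d K y = {frac z | z. z \<in> K \<and> real d * z - y \<in> \<int>}"

definition critical_value :: "nat \<Rightarrow> real set \<Rightarrow> real \<Rightarrow> bool" where
  "critical_value d K y \<longleftrightarrow> y \<in> K \<and> card (preimage_pts d K y) > 1"

definition nonwandering :: "nat \<Rightarrow> real set \<Rightarrow> bool" where
  "nonwandering d K \<longleftrightarrow>
     (\<forall>x\<in>K. \<forall>\<epsilon>>0. \<exists>y\<in>K. \<exists>n>0.
        circ_dist x y < \<epsilon> \<and> circ_dist x ((real d) ^ n * y) < \<epsilon>)"

end

theory Submission
  imports Defs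
begin

lemma frac_eq_iff_Ints: "frac (a::real) = frac b \<longleftrightarrow> a - b \<in> \<int>"
proof
  assume "frac a = frac b"
  then have "a - b = of_int (\<lfloor>a\<rfloor> - \<lfloor>b\<rfloor>)" by (simp add: frac_def)
  then show "a - b \<in> \<int>" by simp
next
  assume "a - b \<in> \<int>"
  then have "frac (b + (a - b)) = frac b" by (rule frac_add_int_right)
  then show "frac a = frac b" by simp
qed

lemma per_nat:
  assumes "periodic_set K" shows "x + real n \<in> K \<longleftrightarrow> x \<in> K"
proof (induction n arbitrary: x)
  case 0 then show ?case by simp
next
  case (Suc n)
  have "x + real (Suc n) = (x + real n) + 1" by simp
  then show ?case using Suc assms unfolding periodic_set_def by metis
qed

lemma per_int:
  assumes "periodic_set K" shows "x + real_of_int k \<in> K \<longleftrightarrow> x \<in> K"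
proof (cases "k \<ge> 0")
  case True
  then obtain n where "k = int n" by (metis nonneg_eq_int)
  then show ?thesis using per_nat[OF assms] by simp
next
  case False
  then have "- k \<ge> 0" by simp
  then obtain n where "- k = int n" by (metis nonneg_eq_int)
  then have k: "k = - int n" by simp
  have "(x - real n) + real n \<in> K \<longleftrightarrow> x - real n \<in> K" using per_nat[OF assms] by blast
  then show ?thesis using k by simp
qed

lemma per_Ints:
  assumes "periodic_set K" "x \<in> K" "x' - x \<in> \<int>" shows "x' \<in> K"
proof -
  obtain k where "x' - x = real_of_int k" using assms(3) by (auto elim: Ints_cases)
  then have "x' = x + real_of_int k" by simp
  then show ?thesis using per_int[OF assms(1)] assms(2) by simp
qed

lemma pow_in:
  assumes "Ed_invariant d K" "x \<in> K" shows "real d ^ n * x \<in> K"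
proof (induction n)
  case 0 then show ?case using assms by simp
next
  case (Suc n)
  have "real d ^ Suc n * x = real d * (real d ^ n * x)" by simp
  then show ?case using Suc assms(1) unfolding Ed_invariant_def by metis
qed

lemma circ_dist_lt:
  assumes "circ_dist x y < e" shows "\<exists>k::int. \<bar>y + real_of_int k - x\<bar> < e"
proof (cases "frac (x - y) < e")
  case True
  have "y + real_of_int \<lfloor>x - y\<rfloor> - x = - frac (x - y)" by (simp add: frac_def)
  then have "\<bar>y + real_of_int \<lfloor>x - y\<rfloor> - x\<bar> = frac (x - y)" by simp
  then show ?thesis using True by metis
next
  case False
  then have h: "1 - frac (x - y) < e" using assms unfolding circ_dist_def by linarith
  have "y + real_of_int (\<lfloor>x - y\<rfloor> + 1) - x = 1 - frac (x - y)" by (simp add: frac_def)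
  moreover have "frac (x - y) < 1" by (rule frac_lt_1)
  ultimately have "\<bar>y + real_of_int (\<lfloor>x - y\<rfloor> + 1) - x\<bar> = 1 - frac (x - y)" by simp
  then show ?thesis using h by metis
qed

definition iso :: "real set \<Rightarrow> real \<Rightarrow> bool" where
  "iso K p \<longleftrightarrow> (\<exists>\<delta>>0. \<forall>w\<in>K. \<bar>w - p\<bar> < \<delta> \<longrightarrow> w = p)"

lemma iso_periodic:
  assumes "periodic_set K" "Ed_invariant d K" "nonwandering d K" "p \<in> K" "iso K p"
  shows "\<exists>n>0. real d ^ n * p - p \<in> \<int>"
proof -
  obtain \<delta> where dp: "\<delta> > 0" and iso: "\<forall>w\<in>K. \<bar>w - p\<bar> < \<delta> \<longrightarrow> w = p"
    using assms(5) unfolding iso_def by blast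
  obtain w n where w: "w \<in> K" "n > 0" "circ_dist p w < \<delta>" "circ_dist p (real d ^ n * w) < \<delta>"
    using assms(3,4) dp unfolding nonwandering_def by blast
  obtain k where k: "\<bar>w + real_of_int k - p\<bar> < \<delta>" using circ_dist_lt[OF w(3)] by blast
  have "w + real_of_int k \<in> K" using per_int[OF assms(1)] w(1) by simp
  then have wk: "w + real_of_int k = p" using iso k by blast
  obtain k' where k': "\<bar>real d ^ n * w + real_of_int k' - p\<bar> < \<delta>" using circ_dist_lt[OF w(4)] by blast
  have "real d ^ n * w \<in> K" using pow_in[OF assms(2) w(1)] .
  then have "real d ^ n * w + real_of_int k' \<in> K" using per_int[OF assms(1)] by simp
  then have wk': "real d ^ n * w + real_of_int k' = p" using iso k' by blast
  have "real d ^ n * p - p = real d ^ n * real_of_int k - real_of_int k'"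
  proof -
    have "real d ^ n * p - p = real d ^ n * (w + real_of_int k) - (real d ^ n * w + real_of_int k')"
      using wk wk' by simp
    then show ?thesis by (simp add: algebra_simps)
  qed
  also have "\<dots> \<in> \<int>" by (intro Ints_diff Ints_mult) auto
  finally show ?thesis using w(2) by blast
qed

lemma iso_pull:
  assumes "d \<ge> 1" "periodic_set K" "Ed_invariant d K" "iso K p" "real d ^ k * q - p \<in> \<int>"
  shows "iso K q"
proof -
  obtain \<delta> where dp: "\<delta> > 0" and iso: "\<forall>w\<in>K. \<bar>w - p\<bar> < \<delta> \<longrightarrow> w = p"
    using assms(4) unfolding iso_def by blast
  have Dp: "real d ^ k > 0" using assms(1) by simp
  have "\<forall>w\<in>K. \<bar>w - q\<bar> < \<delta> / real d ^ k \<longrightarrow> w = q"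
  proof (intro ballI impI)
    fix w assume wK: "w \<in> K" and wl: "\<bar>w - q\<bar> < \<delta> / real d ^ k"
    define t where "t = real d ^ k * w - (real d ^ k * q - p)"
    have "real d ^ k * w \<in> K" using pow_in[OF assms(3) wK] .
    moreover have "t - real d ^ k * w = - (real d ^ k * q - p)" unfolding t_def by simp
    then have "t - real d ^ k * w \<in> \<int>" using assms(5) by (metis Ints_minus)
    ultimately have tK: "t \<in> K" using per_Ints[OF assms(2)] by blast
    have "t - p = real d ^ k * (w - q)" unfolding t_def by (simp add: algebra_simps)
    then have "\<bar>t - p\<bar> = real d ^ k * \<bar>w - q\<bar>" using Dp by (simp add: abs_mult)
    also have "\<dots> < real d ^ k * (\<delta> / real d ^ k)" using mult_strict_left_mono[OF wl Dp] .
    also have "\<dots> = \<delta>" using Dp by simp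
    finally have "t = p" using iso tK by blast
    then have "real d ^ k * w = real d ^ k * q" unfolding t_def by simp
    then show "w = q" using Dp assms(1) by auto
  qed
  then show ?thesis unfolding iso_def using dp Dp by (meson divide_pos_pos)
qed

lemma iter_per:
  assumes "real d ^ n * z - z \<in> \<int>" shows "real d ^ (n * k) * z - z \<in> \<int>"
proof (induction k)
  case 0 then show ?case by simp
next
  case (Suc k)
  have e: "real d ^ (n * Suc k) = real d ^ n * real d ^ (n * k)" by (simp add: power_add)
  have "real d ^ (n * Suc k) * z - z = real d ^ n * (real d ^ (n * k) * z - z) + (real d ^ n * z - z)"
    unfolding e by (simp add: algebra_simps)
  also have "\<dots> \<in> \<int>" using Suc assms by (intro Ints_add Ints_mult) auto
  finally show ?case .
qed

lemma per_same:
  assumes "real d * z - y \<in> \<int>" "real d * z' - y \<in> \<int>"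
    "n > 0" "real d ^ n * z - z \<in> \<int>" "n' > 0" "real d ^ n' * z' - z' \<in> \<int>"
  shows "z - z' \<in> \<int>"
proof -
  define N where "N = n * n'"
  have N: "N > 0" using assms by (simp add: N_def)
  have a: "real d ^ N * z - z \<in> \<int>" unfolding N_def by (rule iter_per[OF assms(4)])
  have b: "real d ^ N * z' - z' \<in> \<int>" unfolding N_def
    by (subst mult.commute) (rule iter_per[OF assms(6)])
  have "real d ^ N = real d ^ (N - 1) * real d" using N power_Suc2[of "real d" "N - 1"] by simp
  then have c: "real d ^ N * z - real d ^ N * z' = real d ^ (N - 1) * ((real d * z - y) - (real d * z' - y))"
    by (simp add: algebra_simps)
  have "(real d * z - y) - (real d * z' - y) \<in> \<int>" using assms(1,2) by (rule Ints_diff)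
  then have "real d ^ N * z - real d ^ N * z' \<in> \<int>" unfolding c
    by (intro Ints_mult) auto
  moreover have "z - z' = (real d ^ N * z' - z') - (real d ^ N * z - z) + (real d ^ N * z - real d ^ N * z')"
    by simp
  ultimately show ?thesis using a b by (metis Ints_add Ints_diff)
qed

lemma isoA:
  fixes d j1 j2 :: nat and K :: "real set" and y a b z :: real
  assumes "d \<ge> 1" "periodic_set K" "Ed_invariant d K" "0 < a" "0 < b"
    and L: "\<forall>x\<in>{y - a<..<y} \<inter> K. preimage_pts d K x = {frac (x / real d + real j1 / real d)}"
    and R: "\<forall>x\<in>{y<..<y + b} \<inter> K. preimage_pts d K x = {frac (x / real d + real j2 / real d)}"
    and zK: "z \<in> K" and zm: "real d * z - y \<in> \<int>"
    and n1: "z - (y / real d + real j1 / real d) \<notin> \<int>"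
    and n2: "z - (y / real d + real j2 / real d) \<notin> \<int>"
  shows "iso K z"
proof -
  define D where "D = real d"
  have Dp: "D > 0" using assms(1) by (simp add: D_def)
  define m where "m = D * z - y"
  have mI: "m \<in> \<int>" using zm by (simp add: m_def D_def)
  have "\<forall>w\<in>K. \<bar>w - z\<bar> < min a b / D \<longrightarrow> w = z"
  proof (intro ballI impI)
    fix w assume wK: "w \<in> K" and wl: "\<bar>w - z\<bar> < min a b / D"
    define x where "x = D * w - m"
    have "D * w \<in> K" using pow_in[OF assms(3) wK, of 1] by (simp add: D_def)
    moreover have "x - D * w \<in> \<int>" using mI by (simp add: x_def)
    ultimately have xK: "x \<in> K" using per_Ints[OF assms(2)] by blast
    have xy: "x - y = D * (w - z)" by (simp add: x_def m_def algebra_simps)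
    have "\<bar>x - y\<bar> = D * \<bar>w - z\<bar>" unfolding xy using Dp by (simp add: abs_mult)
    also have "\<dots> < D * (min a b / D)" using mult_strict_left_mono[OF wl Dp] .
    also have "\<dots> = min a b" using Dp by simp
    finally have xl: "\<bar>x - y\<bar> < min a b" .
    have fw: "frac w \<in> preimage_pts d K x"
      unfolding preimage_pts_def using wK mI by (auto simp: x_def D_def)
    consider "x < y" | "x > y" | "x = y" by linarith
    then show "w = z"
    proof cases
      case 1
      then have "x \<in> {y - a<..<y} \<inter> K" using xl xK by auto
      then have "frac w = frac (x / real d + real j1 / real d)" using L fw by auto
      then have "w - (x / real d + real j1 / real d) \<in> \<int>" using frac_eq_iff_Ints by blast
      moreover have "w - (x / real d + real j1 / real d) = z - (y / real d + real j1 / real d)"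
        using Dp unfolding x_def m_def D_def by (simp add: field_simps)
      ultimately show ?thesis using n1 by simp
    next
      case 2
      then have "x \<in> {y<..<y + b} \<inter> K" using xl xK by auto
      then have "frac w = frac (x / real d + real j2 / real d)" using R fw by auto
      then have "w - (x / real d + real j2 / real d) \<in> \<int>" using frac_eq_iff_Ints by blast
      moreover have "w - (x / real d + real j2 / real d) = z - (y / real d + real j2 / real d)"
        using Dp unfolding x_def m_def D_def by (simp add: field_simps)
      ultimately show ?thesis using n2 by simp
    next
      case 3
      then have "D * (w - z) = 0" using xy by simp
      then show ?thesis using Dp by simp
    qed
  qed
  moreover have "min a b / D > 0" using Dp assms(4,5) by simp
  ultimately show ?thesis unfolding iso_def by blast
qed

theorem lemma2:
  fixes d j1 j2 :: nat and K :: "real set" and y a b :: real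
  assumes "d \<ge> 2"
    and "closed K" and "periodic_set K"
    and "Ed_invariant d K"
    and "nonwandering d K"
    and "critical_value d K y"
    and "0 < a" and "0 < b" and "a + b \<le> 1"
    and "j1 < d" and "j2 < d"
    and "\<forall>x\<in>{y - a<..<y} \<inter> K. preimage_pts d K x = {frac (x / real d + real j1 / real d)}"
    and "\<forall>x\<in>{y<..<y + b} \<inter> K. preimage_pts d K x = {frac (x / real d + real j2 / real d)}"
  shows "j1 \<noteq> j2
    \<and> preimage_pts d K y \<subseteq> {frac (y / real d + real j1 / real d), frac (y / real d + real j2 / real d)}
    \<and> card (preimage_pts d K y) = 2"
proof -
  define c1 where "c1 = y / real d + real j1 / real d"
  define c2 where "c2 = y / real d + real j2 / real d"
  define P where "P = preimage_pts d K y"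
  have d1: "d \<ge> 1" using assms(1) by simp
  have yK: "y \<in> K" and cP: "card P > 1" using assms(6) unfolding critical_value_def P_def by auto
  have key: "z - c1 \<in> \<int> \<or> z - c2 \<in> \<int>" if zK: "z \<in> K" and zy: "real d * z - y \<in> \<int>" for z
  proof (rule ccontr)
    assume "\<not> (z - c1 \<in> \<int> \<or> z - c2 \<in> \<int>)"
    then have n1: "z - c1 \<notin> \<int>" and n2: "z - c2 \<notin> \<int>" by auto
    have isoz: "iso K z" using isoA[OF d1 assms(3,4,7,8,12,13) zK zy] n1 n2 unfolding c1_def c2_def by blast
    obtain n where n: "n > 0" "real d ^ n * z - z \<in> \<int>"
      using iso_periodic[OF assms(3,4,5) zK isoz] by blast
    have "real d ^ n = real d ^ (n - 1) * real d" using n(1) power_Suc2[of "real d" "n - 1"] by simp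
    then have "real d ^ (n - 1) * y - z = (real d ^ n * z - z) - real d ^ (n - 1) * (real d * z - y)"
      by (simp add: algebra_simps)
    also have "\<dots> \<in> \<int>" using n(2) zy by (intro Ints_diff[OF n(2)] Ints_mult) auto
    finally have "real d ^ (n - 1) * y - z \<in> \<int>" .
    then have isoy: "iso K y" using iso_pull[OF d1 assms(3,4) isoz] by blast
    have "P \<subseteq> {frac z}"
    proof
      fix u assume "u \<in> P"
      then obtain z' where z': "u = frac z'" "z' \<in> K" "real d * z' - y \<in> \<int>"
        unfolding P_def preimage_pts_def by blast
      have "iso K z'" using iso_pull[OF d1 assms(3,4) isoy, of 1 z'] z'(3) by simp
      then obtain n' where n': "n' > 0" "real d ^ n' * z' - z' \<in> \<int>"
        using iso_periodic[OF assms(3,4,5) z'(2)] by blast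
      have "z - z' \<in> \<int>" using per_same[OF zy z'(3) n n'] .
      then have "frac z = frac z'" using frac_eq_iff_Ints by blast
      then show "u \<in> {frac z}" using z'(1) by simp
    qed
    then have "card P \<le> card {frac z}" by (intro card_mono) auto
    then have "card P \<le> 1" by simp
    then show False using cP by simp
  qed
  have sub: "P \<subseteq> {frac c1, frac c2}"
  proof
    fix u assume "u \<in> P"
    then obtain z where z: "u = frac z" "z \<in> K" "real d * z - y \<in> \<int>"
      unfolding P_def preimage_pts_def by blast
    then have "z - c1 \<in> \<int> \<or> z - c2 \<in> \<int>" using key by blast
    then show "u \<in> {frac c1, frac c2}" using z(1) frac_eq_iff_Ints by blast
  qed
  have neq: "frac c1 \<noteq> frac c2"
  proof
    assume "frac c1 = frac c2"
    then have "P \<subseteq> {frac c1}" using sub by simp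
    then have "card P \<le> card {frac c1}" by (intro card_mono) auto
    then show False using cP by simp
  qed
  have "card P = 2"
  proof -
    have "card P \<le> card {frac c1, frac c2}" using sub by (intro card_mono) auto
    then show ?thesis using cP neq by simp
  qed
  moreover have "j1 \<noteq> j2" using neq unfolding c1_def c2_def by auto
  ultimately show ?thesis using sub unfolding P_def c1_def c2_def by blast
qed

end
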